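(* Let $f,g$ be mixed polynomials in $\mathbf z=(z_1,z_2)$, $C=\{f=0\}$, $C'=\{g=0\}$, and let $P\in C\cap C'$ be a point where $C$ and $C'$ are both mixed non-singular and intersect transversely. Then the local intersection number defined as the mapping degree of $\psi=\varphi/\|\varphi\|:S^3_\varepsilon(P)\to S^3$, $\varphi=(f_{\mathbb R},f_I,g_{\mathbb R},g_I)$, coincides with the topological intersection number $\operatorname{Sign}(\mathbf u_1,\mathbf u_2,\mathbf v_1,\mathbf v_2)$, where $(\mathbf u_1,\mathbf u_2)$, $(\mathbf v_1,\mathbf v_2)$ are positive bases of $T_PC$, $T_PC'$.
   Context: Identify $\mathbb C^2$ with $\mathbb R^4$ via $z_j=x_j+iy_j$, coordinates $(x_1,y_1,x_2,y_2)$, standard orientation. Write $f=f_{\mathbb R}+if_I$, $g=g_{\mathbb R}+ig_I$ with real polynomial real and imaginary parts. $C$ is mixed non-singular at $P$ if the Jacobian of $(f_{\mathbb R},f_I)$ has rank $2$ at $P$; $T_PC$ is oriented so that $(\mathbf u_1,\mathbf u_2)$ is positive iff $(\mathbf u_1,\mathbf u_2,\operatorname{grad} f_{\mathbb R}(P),\operatorname{grad} f_I(P))$ is a positive basis of $\mathbb R^4$ (similarly for $C'$). $\operatorname{Sign}$ of a basis of $\mathbb R^4$ is the sign of its determinant. $S^3_\varepsilon(P)=\{\mathbf x\in\mathbb R^4:\|\mathbf x-P\|=\varepsilon\}$, with $\varepsilon>0$ small enough that $P$ is the only point of $C\cap C'$ in the closed ball of radius $\varepsilon$ about $P$; the sphere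 is oriented as the boundary of this ball. *)

theory Defs
  imports "HOL-Analysis.Analysis" "HOL-Homology.Homology"
begin

definition mixed_poly :: "(complex \<times> complex \<Rightarrow> complex) \<Rightarrow> bool" where
  "mixed_poly f \<longleftrightarrow>
     (\<exists>(c :: nat \<times> nat \<times> nat \<times> nat \<Rightarrow> complex) (N :: nat).
        (\<forall>z1 z2. f (z1, z2) =
           (\<Sum>a\<le>N. \<Sum>b\<le>N. \<Sum>d\<le>N. \<Sum>e\<le>N.
               c (a, b, d, e) * z1 ^ a * cnj z1 ^ b * z2 ^ d * cnj z2 ^ e)))"

definition to_C2 :: "real^4 \<Rightarrow> complex \<times> complex" where
  "to_C2 x = (Complex (x$1) (x$2), Complex (x$3) (x$4))"

definition re_part :: "(complex \<times> complex \<Rightarrow> complex) \<Rightarrow> real^4 \<Rightarrow> real" where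
  "re_part f x = Re (f (to_C2 x))"

definition im_part :: "(complex \<times> complex \<Rightarrow> complex) \<Rightarrow> real^4 \<Rightarrow> real" where
  "im_part f x = Im (f (to_C2 x))"

definition zero_set :: "(complex \<times> complex \<Rightarrow> complex) \<Rightarrow> (real^4) set" where
  "zero_set f = {x. f (to_C2 x) = 0}"

definition jac :: "(complex \<times> complex \<Rightarrow> complex) \<Rightarrow> real^4 \<Rightarrow> real^4^2" where
  "jac f P = matrix (frechet_derivative (\<lambda>x. vector [re_part f x, im_part f x] :: real^2) (at P))"

definition grad_re :: "(complex \<times> complex \<Rightarrow> complex) \<Rightarrow> real^4 \<Rightarrow> real^4" where
  "grad_re f P = row 1 (jac f P)"

definition grad_im :: "(complex \<times> complex \<Rightarrow> complex) \<Rightarrow> real^4 \<Rightarrow> real^4" where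
  "grad_im f P = row 2 (jac f P)"

definition mixed_nonsingular_at :: "(complex \<times> complex \<Rightarrow> complex) \<Rightarrow> real^4 \<Rightarrow> bool" where
  "mixed_nonsingular_at f P \<longleftrightarrow> rank (jac f P) = 2"

definition tangent_space :: "(complex \<times> complex \<Rightarrow> complex) \<Rightarrow> real^4 \<Rightarrow> (real^4) set" where
  "tangent_space f P = {v. jac f P *v v = 0}"

definition transverse_at ::
  "(complex \<times> complex \<Rightarrow> complex) \<Rightarrow> (complex \<times> complex \<Rightarrow> complex) \<Rightarrow> real^4 \<Rightarrow> bool" where
  "transverse_at f g P \<longleftrightarrow> span (tangent_space f P \<union> tangent_space g P) = UNIV"

text \<open>Determinant of the 4 vectors (as rows; same sign as with columns).\<close>
definition det4 :: "real^4 \<Rightarrow> real^4 \<Rightarrow> real^4 \<Rightarrow> real^4 \<Rightarrow> real" where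
  "det4 a b c d = det (vector [a, b, c, d] :: real^4^4)"

definition positive_tangent_basis ::
  "(complex \<times> complex \<Rightarrow> complex) \<Rightarrow> real^4 \<Rightarrow> real^4 \<Rightarrow> real^4 \<Rightarrow> bool" where
  "positive_tangent_basis f P u1 u2 \<longleftrightarrow>
     u1 \<in> tangent_space f P \<and> u2 \<in> tangent_space f P \<and>
     independent {u1, u2} \<and> u1 \<noteq> u2 \<and> span {u1, u2} = tangent_space f P \<and>
     det4 u1 u2 (grad_re f P) (grad_im f P) > 0"

text \<open>Conversion between real^4 and the coordinates nat => real used by nsphere 3.\<close>
definition to_R4 :: "(nat \<Rightarrow> real) \<Rightarrow> real^4" where
  "to_R4 y = vector [y 0, y 1, y 2, y 3]"

definition from_R4 :: "real^4 \<Rightarrow> nat \<Rightarrow> real" where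
  "from_R4 v = (\<lambda>i. if i = 0 then v$1 else if i = 1 then v$2 else if i = 2 then v$3
                     else if i = 3 then v$4 else 0)"

definition phi_map ::
  "(complex \<times> complex \<Rightarrow> complex) \<Rightarrow> (complex \<times> complex \<Rightarrow> complex) \<Rightarrow> real^4 \<Rightarrow> real^4" where
  "phi_map f g x = vector [re_part f x, im_part f x, re_part g x, im_part g x]"

text \<open>Local intersection number: degree of psi = phi/|phi| : S^3_eps(P) -> S^3, where
  S^3_eps(P) is identified with the unit sphere S^3 via the orientation preserving map
  y \<mapsto> P + eps y.\<close>
definition local_intersection_degree ::
  "(complex \<times> complex \<Rightarrow> complex) \<Rightarrow> (complex \<times> complex \<Rightarrow> complex) \<Rightarrow> real^4 \<Rightarrow> real \<Rightarrow> int" where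
  "local_intersection_degree f g P \<epsilon> =
     Brouwer_degree2 3 (\<lambda>y. from_R4 (sgn (phi_map f g (P + \<epsilon> *\<^sub>R to_R4 y))))"

end

theory Submission
  imports Defs
begin


lemma vector_4 [simp]:
 "(vector [x,y,z,w] ::('a::zero)^4)$1 = x"
 "(vector [x,y,z,w] ::('a::zero)^4)$2 = y"
 "(vector [x,y,z,w] ::('a::zero)^4)$3 = z"
 "(vector [x,y,z,w] ::('a::zero)^4)$4 = w"
  unfolding vector_def by simp_all

lemma det_4:
  "det (A::'a::comm_ring_1^4^4) =
  A$1$1*A$2$2*A$3$3*A$4$4 - A$1$1*A$2$2*A$3$4*A$4$3 - A$1$1*A$2$3*A$3$2*A$4$4
+ A$1$1*A$2$3*A$3$4*A$4$2 + A$1$1*A$2$4*A$3$2*A$4$3 - A$1$1*A$2$4*A$3$3*A$4$2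
- A$1$2*A$2$1*A$3$3*A$4$4 + A$1$2*A$2$1*A$3$4*A$4$3 + A$1$2*A$2$3*A$3$1*A$4$4
- A$1$2*A$2$3*A$3$4*A$4$1 - A$1$2*A$2$4*A$3$1*A$4$3 + A$1$2*A$2$4*A$3$3*A$4$1
+ A$1$3*A$2$1*A$3$2*A$4$4 - A$1$3*A$2$1*A$3$4*A$4$2 - A$1$3*A$2$2*A$3$1*A$4$4
+ A$1$3*A$2$2*A$3$4*A$4$1 + A$1$3*A$2$4*A$3$1*A$4$2 - A$1$3*A$2$4*A$3$2*A$4$1
- A$1$4*A$2$1*A$3$2*A$4$3 + A$1$4*A$2$1*A$3$3*A$4$2 + A$1$4*A$2$2*A$3$1*A$4$3
- A$1$4*A$2$2*A$3$3*A$4$1 - A$1$4*A$2$3*A$3$1*A$4$2 + A$1$4*A$2$3*A$3$2*A$4$1"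
proof -
  have f1: "finite {2::4, 3, 4}" "1 \<notin> {2::4, 3, 4}" by auto
  have f2: "finite {3::4, 4}" "2 \<notin> {3::4, 4}" by auto
  have f3: "finite {4::4}" "3 \<notin> {4::4}" by auto
  show ?thesis
    unfolding det_def UNIV_4
    unfolding sum_over_permutations_insert[OF f1]
    unfolding sum_over_permutations_insert[OF f2]
    unfolding sum_over_permutations_insert[OF f3]
    unfolding permutes_sing
    by (simp add: sign_swap_id permutation_swap_id sign_compose sign_id swap_id_eq permutation_compose)
qed

lemma det4_gram:
  "det4 a b c d * det4 p q r s =
   det (\<chi> i j. (vector[a,b,c,d]::real^4^4)$i \<bullet> (vector[p,q,r,s]::real^4^4)$j)"
proof -
  have "det4 a b c d * det4 p q r s
      = det ((vector[a,b,c,d]::real^4^4) ** transpose (vector[p,q,r,s]::real^4^4))"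
    by (simp add: det4_def det_mul det_transpose)
  also have "(vector[a,b,c,d]::real^4^4) ** transpose (vector[p,q,r,s]::real^4^4)
     = (\<chi> i j. (vector[a,b,c,d]::real^4^4)$i \<bullet> (vector[p,q,r,s]::real^4^4)$j)"
    by (simp add: matrix_matrix_mult_def transpose_def inner_vec_def vec_eq_iff)
  finally show ?thesis .
qed

lemma det4_swap_pairs: "det4 v1 v2 u1 u2 = det4 u1 u2 v1 v2"
  unfolding det4_def det_4 by (simp add: algebra_simps)

lemma sign_rel:
  fixes a1 a2 b1 b2 u1 u2 v1 v2 :: "real^4"
  assumes o: "a1 \<bullet> u1 = 0" "a1 \<bullet> u2 = 0" "a2 \<bullet> u1 = 0" "a2 \<bullet> u2 = 0"
    "b1 \<bullet> v1 = 0" "b1 \<bullet> v2 = 0" "b2 \<bullet> v1 = 0" "b2 \<bullet> v2 = 0"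
    and c1: "det4 u1 u2 a1 a2 > 0" and c2: "det4 v1 v2 b1 b2 > 0"
    and D: "det4 u1 u2 v1 v2 \<noteq> 0"
  shows "sgn (det4 a1 a2 b1 b2) = sgn (det4 u1 u2 v1 v2)"
proof -
  define AV where "AV = (a1\<bullet>v1)*(a2\<bullet>v2) - (a1\<bullet>v2)*(a2\<bullet>v1)"
  define BU where "BU = (b1\<bullet>u1)*(b2\<bullet>u2) - (b1\<bullet>u2)*(b2\<bullet>u1)"
  define gu where "gu = (u1\<bullet>u1)*(u2\<bullet>u2) - (u1\<bullet>u2)*(u2\<bullet>u1)"
  define gv where "gv = (v1\<bullet>v1)*(v2\<bullet>v2) - (v1\<bullet>v2)*(v2\<bullet>v1)"
  have e1: "det4 a1 a2 b1 b2 * det4 u1 u2 v1 v2 = AV * BU"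
    unfolding det4_gram det_4 AV_def BU_def using o by (simp add: inner_commute algebra_simps)
  have e2: "det4 u1 u2 a1 a2 * det4 u1 u2 v1 v2 = gu * AV"
    unfolding det4_gram det_4 AV_def gu_def using o by (simp add: inner_commute algebra_simps)
  have e3: "det4 v1 v2 b1 b2 * det4 v1 v2 u1 u2 = gv * BU"
    unfolding det4_gram det_4 BU_def gv_def using o by (simp add: inner_commute algebra_simps)
  have gu: "gu \<ge> 0" unfolding gu_def using Cauchy_Schwarz_ineq[of u1 u2]
    by (simp add: inner_commute power2_eq_square)
  have gv: "gv \<ge> 0" unfolding gv_def using Cauchy_Schwarz_ineq[of v1 v2]
    by (simp add: inner_commute power2_eq_square)
  define M where "M = det4 a1 a2 b1 b2"
  define d where "d = det4 u1 u2 v1 v2"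
  define k1 where "k1 = det4 u1 u2 a1 a2"
  define k2 where "k2 = det4 v1 v2 b1 b2"
  have E1: "M * d = AV * BU" using e1 by (simp add: M_def d_def)
  have E2: "k1 * d = gu * AV" using e2 by (simp add: k1_def d_def)
  have E3: "k2 * d = gv * BU" using e3 by (simp add: k2_def d_def det4_swap_pairs)
  have "k1 * k2 * d * d = gu * gv * (M * d)"
    using E1 E2 E3 by (metis mult.assoc mult.commute)
  then have E: "k1 * k2 * d = gu * gv * M" using D d_def
    by (metis (no_types, lifting) mult.assoc mult_right_cancel)
  have "k1 * k2 * d \<noteq> 0" using c1 c2 D k1_def k2_def d_def by simp
  then have "gu * gv > 0" using E gu gv
    by (metis mult_eq_0_iff order_le_less mult_pos_pos)
  moreover have "k1 * k2 > 0" using c1 c2 k1_def k2_def by simp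
  ultimately show ?thesis using E unfolding M_def[symmetric] d_def[symmetric]
    by (metis sgn_mult sgn_pos mult_1)
qed



lemma continuous_map_vecI:
  fixes f :: "'a \<Rightarrow> real^'n"
  assumes "\<And>i. continuous_map X euclidean (\<lambda>x. f x $ i)"
  shows "continuous_map X euclidean f"
  using assms unfolding continuous_map_atin limitin_canonical_iff
  by (blast intro: vec_tendstoI)

lemma to_R4_nth [simp]:
  "to_R4 y $ 1 = y 0" "to_R4 y $ 2 = y 1" "to_R4 y $ 3 = y 2" "to_R4 y $ 4 = y 3"
  by (simp_all add: to_R4_def)

lemma norm_R4: "norm (x::real^4) = sqrt ((x$1)^2 + (x$2)^2 + (x$3)^2 + (x$4)^2)"
  by (simp add: norm_vec_def L2_set_def sum_4)

lemma sum_le3: "(\<Sum>i\<le>3. (y::nat\<Rightarrow>real) i) = y 0 + y 1 + y 2 + y 3"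
  by (simp add: numeral_3_eq_3 atMost_Suc numeral_2_eq_2 add_ac)

lemma topspace_nsphere3:
  "topspace (nsphere 3) = {y. (\<Sum>i\<le>3. y i ^ 2) = 1 \<and> (\<forall>i>3. y i = (0::real))}"
  by (simp add: nsphere)

lemma to_R4_sphere: "y \<in> topspace (nsphere 3) \<Longrightarrow> to_R4 y \<in> sphere 0 1"
  by (simp add: topspace_nsphere3 norm_R4 sum_le3)

lemma cont_to_R4: "continuous_map (nsphere 3) (top_of_set (sphere (0::real^4) 1)) to_R4"
proof -
  have "continuous_map (nsphere 3) euclidean to_R4"
  proof (rule continuous_map_vecI)
    fix i :: 4
    have "i = 1 \<or> i = 2 \<or> i = 3 \<or> i = 4" by (rule exhaust_4)
    then show "continuous_map (nsphere 3) euclideanreal (\<lambda>x. to_R4 x $ i)"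
      by (auto intro: continuous_map_nsphere_projection)
  qed
  then show ?thesis
    using to_R4_sphere by (auto simp: continuous_map_in_subtopology)
qed

lemma from_R4_sphere: "v \<in> sphere (0::real^4) 1 \<Longrightarrow> from_R4 v \<in> topspace (nsphere 3)"
proof -
  assume "v \<in> sphere 0 1"
  then have "(v$1)^2 + (v$2)^2 + (v$3)^2 + (v$4)^2 = 1"
    by (simp add: norm_R4)
  then show ?thesis
    by (simp add: topspace_nsphere3 sum_le3 from_R4_def)
qed

lemma cont_from_R4: "continuous_map (top_of_set (sphere (0::real^4) 1)) (nsphere 3) from_R4"
proof -
  have "continuous_map (top_of_set (sphere (0::real^4) 1)) (powertop_real UNIV) from_R4"
    unfolding continuous_map_componentwise_UNIV
  proof
    fix k
    show "continuous_map (top_of_set (sphere 0 1)) euclideanreal (\<lambda>x. from_R4 x k)"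
      unfolding from_R4_def continuous_map_iff_continuous
      by (cases "k = 0"; cases "k = 1"; cases "k = 2"; cases "k = 3")
         (auto intro!: continuous_intros)
  qed
  moreover have "from_R4 ` sphere 0 1 \<subseteq> {y. (\<Sum>i\<le>3. y i ^ 2) = 1 \<and> (\<forall>i>3. y i = (0::real))}"
    using from_R4_sphere topspace_nsphere3 by blast
  ultimately show ?thesis
    by (auto simp: nsphere continuous_map_in_subtopology)
qed

lemma to_from_R4 [simp]: "to_R4 (from_R4 v) = v"
  by (simp add: to_R4_def from_R4_def vec_eq_iff forall_4)

lemma from_to_R4: "y \<in> topspace (nsphere 3) \<Longrightarrow> from_R4 (to_R4 y) = y"
  by (auto simp: topspace_nsphere3 from_R4_def fun_eq_iff)



definition degL :: "(real^4 \<Rightarrow> real^4) \<Rightarrow> int" where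
  "degL F = Brouwer_degree2 3 (\<lambda>y. from_R4 (sgn (F (to_R4 y))))"

lemma cont_sgnK:
  assumes "continuous_on S K" "\<forall>p\<in>S. K p \<noteq> (0::real^4)"
  shows "continuous_map (top_of_set S) (top_of_set (sphere 0 1)) (\<lambda>p. sgn (K p))"
  using assms by (auto simp: continuous_map_in_subtopology norm_sgn intro!: continuous_intros)

lemma cont_deg_map:
  assumes "continuous_on (sphere 0 1) F" "\<forall>x\<in>sphere 0 1. F x \<noteq> (0::real^4)"
  shows "continuous_map (nsphere 3) (nsphere 3) (\<lambda>y. from_R4 (sgn (F (to_R4 y))))"
proof -
  have "continuous_map (nsphere 3) (nsphere 3) (from_R4 \<circ> (\<lambda>p. sgn (F p)) \<circ> to_R4)"
    by (intro continuous_map_compose[OF _ cont_from_R4] continuous_map_compose[OF cont_to_R4] cont_sgnK assms)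
  then show ?thesis by (simp add: o_def)
qed

lemma deg_homotopy:
  fixes K :: "real \<times> (real^4) \<Rightarrow> real^4"
  assumes K: "continuous_on ({0..1} \<times> sphere 0 1) K"
    and nz: "\<forall>t\<in>{0..1}. \<forall>x\<in>sphere 0 1. K (t, x) \<noteq> (0::real^4)"
  shows "degL (\<lambda>x. K (0, x)) = degL (\<lambda>x. K (1, x))"
  unfolding degL_def
proof (rule Brouwer_degree2_homotopic)
  let ?h = "\<lambda>(t, y). from_R4 (sgn (K (t, to_R4 y)))"
  have c1: "continuous_map (prod_topology (top_of_set {0..1::real}) (nsphere 3))
     (top_of_set ({0..1} \<times> sphere (0::real^4) 1)) (\<lambda>(t, y). (t, to_R4 y))"
  proof -
    have "continuous_map (prod_topology (top_of_set {0..1}) (nsphere 3))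
      (prod_topology (top_of_set {0..1::real}) (top_of_set (sphere (0::real^4) 1))) (\<lambda>(t, y). (id t, to_R4 y))"
      unfolding continuous_map_prod_top using cont_to_R4 by auto
    moreover have "prod_topology (top_of_set {0..1::real}) (top_of_set (sphere (0::real^4) 1))
        = top_of_set ({0..1} \<times> sphere 0 1)"
      by (simp flip: subtopology_Times)
    ultimately show ?thesis by simp
  qed
  have c2: "continuous_map (top_of_set ({0..1} \<times> sphere 0 1)) (top_of_set (sphere 0 1)) (\<lambda>p. sgn (K p))"
    using K nz by (intro cont_sgnK) auto
  have "continuous_map (prod_topology (top_of_set {0..1}) (nsphere 3)) (nsphere 3)
     (from_R4 \<circ> (\<lambda>p. sgn (K p)) \<circ> (\<lambda>(t, y). (t, to_R4 y)))"
    using continuous_map_compose[OF c1 continuous_map_compose[OF c2 cont_from_R4]] by (simp add: o_assoc)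
  then have "continuous_map (prod_topology (top_of_set {0..1}) (nsphere 3)) (nsphere 3) ?h"
    by (simp add: o_def case_prod_unfold)
  then show "homotopic_with (\<lambda>x. True) (nsphere 3) (nsphere 3)
     (\<lambda>y. from_R4 (sgn (K (0, to_R4 y)))) (\<lambda>y. from_R4 (sgn (K (1, to_R4 y))))"
    unfolding homotopic_with_def by (intro exI[of _ ?h]) auto
qed



lemma sgn_norm1: "norm (v::'a::real_normed_vector) = 1 \<Longrightarrow> sgn v = v"
  by (simp add: sgn_div_norm)

lemma linear_cont_sphere: "linear (F::real^4 \<Rightarrow> real^4) \<Longrightarrow> continuous_on S F"
  by (simp add: linear_continuous_on linear_conv_bounded_linear)

lemma inj_nz: "linear F \<Longrightarrow> inj F \<Longrightarrow> x \<noteq> 0 \<Longrightarrow> F x \<noteq> 0"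
  by (metis linear_0 injD)

lemma cont_deg_map_lin:
  "linear F \<Longrightarrow> inj F \<Longrightarrow> continuous_map (nsphere 3) (nsphere 3) (\<lambda>y. from_R4 (sgn (F (to_R4 y))))"
proof (rule cont_deg_map)
  assume l: "linear F" and i: "inj F"
  show "continuous_on (sphere 0 1) F" using l by (rule linear_cont_sphere)
  show "\<forall>x\<in>sphere 0 1. F x \<noteq> 0"
  proof
    fix x :: "real^4" assume "x \<in> sphere 0 1"
    then have "x \<noteq> 0" by auto
    then show "F x \<noteq> 0" using inj_nz[OF l i] by blast
  qed
qed

lemma sgn_lin_sgn: "linear F \<Longrightarrow> sgn (F (sgn v)) = sgn (F (v::real^4) :: real^4)"
proof (cases "v = 0")
  case True
  assume "linear F" then show ?thesis using True by (simp add: linear_0)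
next
  case False
  assume l: "linear F"
  have "F (sgn v) = inverse (norm v) *\<^sub>R F v"
    by (simp add: sgn_div_norm l linear_scale divide_inverse_commute scaleR_conv_of_real)
       (metis l linear_scale scaleR_conv_of_real divide_inverse_commute)
  then show ?thesis using False by (simp add: sgn_scaleR)
qed

lemma deg_compose:
  assumes "linear F" "linear G" "inj F" "inj G"
  shows "degL (F \<circ> G) = degL F * degL G"
proof -
  have "degL (F \<circ> G) = Brouwer_degree2 3
     ((\<lambda>y. from_R4 (sgn (F (to_R4 y)))) \<circ> (\<lambda>y. from_R4 (sgn (G (to_R4 y)))))"
    unfolding degL_def using assms(1) by (simp add: o_def sgn_lin_sgn)
  also have "\<dots> = degL F * degL G"
    unfolding degL_def
    by (rule Brouwer_degree2_compose) (use assms cont_deg_map_lin in auto)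
  finally show ?thesis .
qed

lemma deg_id: "degL (\<lambda>x. x) = 1"
proof -
  have "degL (\<lambda>x. x) = Brouwer_degree2 3 id"
    unfolding degL_def
  proof (rule Brouwer_degree2_eq)
    fix y assume y: "y \<in> topspace (nsphere 3)"
    then have "norm (to_R4 y) = 1" using to_R4_sphere by simp
    then show "from_R4 (sgn (to_R4 y)) = id y" using y by (simp add: sgn_norm1 from_to_R4)
  qed
  then show ?thesis by simp
qed

definition refl4 :: "4 \<Rightarrow> real^4 \<Rightarrow> real^4" where
  "refl4 k x = (\<chi> i. if i = k then - x$i else x$i)"

definition swp4 :: "4 \<Rightarrow> real^4 \<Rightarrow> real^4" where
  "swp4 k x = (\<chi> i. x $ Transposition.transpose 1 k i)"

lemma linear_refl4: "linear (refl4 k)"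
  by (rule linearI) (auto simp: refl4_def vec_eq_iff)

lemma linear_swp4: "linear (swp4 k)"
  by (rule linearI) (auto simp: swp4_def vec_eq_iff)

lemma refl4_refl4: "refl4 k (refl4 k x) = x"
  by (simp add: refl4_def vec_eq_iff)

lemma swp4_swp4: "swp4 k (swp4 k x) = x"
  by (simp add: swp4_def vec_eq_iff)

lemma inj_refl4: "inj (refl4 k)"
  by (metis injI refl4_refl4)

lemma inj_swp4: "inj (swp4 k)"
  by (metis injI swp4_swp4)

lemma norm_refl4: "norm (refl4 k x) = norm x"
  unfolding norm_vec_def refl4_def L2_set_def by (auto intro!: sum.cong arg_cong[where f=sqrt])

lemma deg_refl1: "degL (refl4 1) = -1"
proof -
  have "degL (refl4 1) = Brouwer_degree2 3 (\<lambda>x i. if i = 0 then -x i else x i)"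
    unfolding degL_def
  proof (rule Brouwer_degree2_eq)
    fix y assume y: "y \<in> topspace (nsphere 3)"
    then have n: "norm (refl4 1 (to_R4 y)) = 1" using to_R4_sphere norm_refl4 by simp
    show "from_R4 (sgn (refl4 1 (to_R4 y))) = (\<lambda>i. if i = 0 then - y i else y i)"
      using y unfolding sgn_norm1[OF n]
      by (auto simp: fun_eq_iff from_R4_def refl4_def topspace_nsphere3)
  qed
  then show ?thesis by (simp add: Brouwer_degree2_reflection)
qed

lemma deg_swp4_sq: "degL (swp4 k) * degL (swp4 k) = 1"
proof -
  have "degL (swp4 k \<circ> swp4 k) = degL (swp4 k) * degL (swp4 k)"
    by (rule deg_compose) (auto simp: linear_swp4 inj_swp4)
  moreover have "swp4 k \<circ> swp4 k = (\<lambda>x. x)" by (auto simp: swp4_swp4)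
  ultimately show ?thesis using deg_id by simp
qed

lemma deg_refl4: "degL (refl4 k) = -1"
proof (cases "k = 1")
  case True then show ?thesis using deg_refl1 by simp
next
  case False
  have eq: "refl4 k = swp4 k \<circ> (refl4 1 \<circ> swp4 k)"
    using False by (auto simp: fun_eq_iff vec_eq_iff refl4_def swp4_def Transposition.transpose_def)
  have "degL (refl4 k) = degL (swp4 k) * (degL (refl4 1) * degL (swp4 k))"
    unfolding eq
    by (subst deg_compose; (subst deg_compose)?)
       (auto simp: linear_swp4 inj_swp4 linear_refl4 inj_refl4 intro: linear_compose inj_compose)
  then show ?thesis using deg_refl1 deg_swp4_sq by (simp add: algebra_simps)
qed



lemma coef_nz:
  fixes c t :: real
  assumes "c \<noteq> 0" "0 \<le> t" "t \<le> 1"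
  shows "(1 - t) * c + t * sgn c \<noteq> 0"
proof (cases "c > 0")
  case True
  have "(1 - t) * c \<ge> 0" using assms True by simp
  moreover have "t = 0 \<or> t > 0" using assms by auto
  ultimately show ?thesis using True by (auto simp: add_nonneg_pos)
next
  case False
  then have c: "c < 0" using assms by simp
  have "(1 - t) * c \<le> 0" using assms c by (simp add: mult_nonneg_nonpos)
  moreover have "t = 0 \<or> t > 0" using assms by auto
  ultimately show ?thesis using c by (auto simp: add_nonpos_neg)
qed

lemma sphere_nz_comp: "x \<in> sphere (0::real^4) 1 \<Longrightarrow> \<exists>i. x$i \<noteq> 0"
  by (metis vec_eq_iff zero_index norm_zero mem_sphere_0 zero_neq_one)

definition dg :: "real \<Rightarrow> 4 \<Rightarrow> real^4 \<Rightarrow> real^4" where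
  "dg s k x = (\<chi> i. (if i = k then s else 1) * x$i)"

lemma linear_dg: "linear (dg s k)"
  by (rule linearI) (auto simp: dg_def vec_eq_iff algebra_simps)

lemma inj_dg: "s \<noteq> 0 \<Longrightarrow> inj (dg s k)"
proof (rule injI)
  assume s: "s \<noteq> 0"
  fix x y assume "dg s k x = dg s k y"
  then have e: "\<And>i. (if i = k then s else 1) * x$i = (if i = k then s else 1) * y$i"
    unfolding dg_def vec_eq_iff by simp
  have "x$i = y$i" for i
    using e[of i] s by (cases "i = k") auto
  then show "x = y" by (simp add: vec_eq_iff)
qed

lemma deg_dg: "c \<noteq> 0 \<Longrightarrow> real_of_int (degL (dg (sgn c) k)) = sgn c"
proof (cases "c > 0")
  case True
  then have "dg (sgn c) k = (\<lambda>x. x)" by (auto simp: dg_def vec_eq_iff fun_eq_iff)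
  then show ?thesis using True deg_id by simp
next
  case False
  assume "c \<noteq> 0"
  with False have "c < 0" by simp
  then have "dg (sgn c) k = refl4 k" by (auto simp: dg_def refl4_def vec_eq_iff fun_eq_iff)
  then show ?thesis using \<open>c < 0\<close> deg_refl4 by simp
qed

lemma deg_diag:
  assumes c: "\<And>i. c i \<noteq> 0"
  shows "real_of_int (degL (\<lambda>x. \<chi> i. c i * x$i)) = sgn (c 1) * sgn (c 2) * sgn (c 3) * sgn (c 4)"
proof -
  let ?K = "\<lambda>p::real \<times> (real^4). \<chi> i. ((1 - fst p) * c i + fst p * sgn (c i)) * snd p $ i"
  have "degL (\<lambda>x. ?K (0, x)) = degL (\<lambda>x. ?K (1, x))"
  proof (rule deg_homotopy)
    show "continuous_on ({0..1} \<times> sphere 0 1) ?K"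
      by (intro continuous_on_vec_lambda continuous_intros)
    show "\<forall>t\<in>{0..1}. \<forall>x\<in>sphere 0 1. ?K (t, x) \<noteq> 0"
    proof (intro ballI)
      fix t x assume t: "t \<in> {0..(1::real)}" and x: "(x::real^4) \<in> sphere 0 1"
      obtain i where i: "x$i \<noteq> 0" using sphere_nz_comp[OF x] by blast
      have "(1 - t) * c i + t * sgn (c i) \<noteq> 0" using coef_nz[OF c] t by auto
      then have "?K (t, x) $ i \<noteq> 0" using i by (simp only: vec_lambda_beta fst_conv snd_conv mult_eq_0_iff) simp
      then show "?K (t, x) \<noteq> 0" by (metis zero_index)
    qed
  qed
  then have "degL (\<lambda>x. \<chi> i. c i * x$i) = degL (\<lambda>x. \<chi> i. sgn (c i) * x$i)" by simp
  also have "(\<lambda>x. \<chi> i. sgn (c i) * x$i) =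
     dg (sgn (c 1)) 1 \<circ> (dg (sgn (c 2)) 2 \<circ> (dg (sgn (c 3)) 3 \<circ> dg (sgn (c 4)) 4))"
    by (auto simp: fun_eq_iff vec_eq_iff dg_def forall_4)
  also have "degL \<dots> = degL (dg (sgn (c 1)) 1) * (degL (dg (sgn (c 2)) 2) *
      (degL (dg (sgn (c 3)) 3) * degL (dg (sgn (c 4)) 4)))"
  proof -
    have ij: "inj (dg (sgn (c k)) k)" for k by (rule inj_dg) (metis c sgn_zero_iff)
    show ?thesis using ij by (subst deg_compose; (subst deg_compose)?; (subst deg_compose)?)
       (auto simp: linear_dg intro!: linear_compose inj_compose)
  qed
  finally show ?thesis using c by (simp add: deg_dg)
qed





lemma det_diag: "det (matrix (\<lambda>x::real^4. \<chi> i. c i * x$i)) = c 1 * c 2 * c 3 * c 4"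
proof -
  have m: "matrix (\<lambda>x::real^4. \<chi> i. c i * x$i) = (\<chi> i j. if i = j then c i else 0)"
    unfolding matrix_def
    by (rule iffD2[OF vec_eq_iff], rule allI, rule iffD2[OF vec_eq_iff], rule allI) (simp add: axis_def)
  have d: "det (\<chi> i j. if i = j then c i else 0 :: real^4^4) = prod c UNIV"
    by (subst det_diagonal) auto
  have p: "prod c UNIV = c 1 * c 2 * c 3 * c 4" unfolding UNIV_4 by simp
  show ?thesis by (simp only: m d p)
qed

lemma det_swap:
  assumes "m \<noteq> n"
  shows "det (matrix (\<lambda>x::real^4. \<chi> i. x $ Transposition.transpose m n i)) = -1"
proof -
  have m: "matrix (\<lambda>x::real^4. \<chi> i. x $ Transposition.transpose m n i)
      = (\<chi> i. (mat 1 :: real^4^4) $ Transposition.transpose m n i)"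
    unfolding matrix_def
    by (rule iffD2[OF vec_eq_iff], rule allI, rule iffD2[OF vec_eq_iff], rule allI) (simp add: axis_def mat_def)
  have "det (\<chi> i. (mat 1 :: real^4^4) $ Transposition.transpose m n i) = of_int (sign (Transposition.transpose m n)) * det (mat 1 :: real^4^4)"
    by (rule det_permute_rows) (rule permutes_swap_id, auto)
  also have "\<dots> = -1" using assms by (simp add: sign_swap_id)
  finally show ?thesis by (simp only: m)
qed

lemma det_shear:
  assumes "m \<noteq> n"
  shows "det (matrix (\<lambda>x::real^4. \<chi> i. if i = m then x$m + x$n else x$i)) = 1"
proof -
  have m: "matrix (\<lambda>x::real^4. \<chi> i. if i = m then x$m + x$n else x$i)
      = (\<chi> k. if k = m then row m (mat 1) + 1 *s row n (mat 1) else row k (mat 1 :: real^4^4))"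
    unfolding matrix_def
    by (rule iffD2[OF vec_eq_iff], rule allI, rule iffD2[OF vec_eq_iff], rule allI) (simp add: axis_def mat_def row_def)
  have "det (\<chi> k. if k = m then row m (mat 1) + 1 *s row n (mat 1) else row k (mat 1 :: real^4^4)) = det (mat 1 :: real^4^4)"
    by (rule det_row_operation) (rule assms)
  then show ?thesis by (simp only: m det_I)
qed



lemma rot_inv: "c^2 + s^2 = (1::real) \<Longrightarrow> a = -c * (-c*a + s*b) + s * (s*a + c*b)"
proof -
  assume h: "c^2 + s^2 = 1"
  have "-c * (-c*a + s*b) + s * (s*a + c*b) = a * (c^2 + s^2)" by (simp add: algebra_simps power2_eq_square)
  then show ?thesis using h by simp
qed

lemma rot_inv2: "c^2 + s^2 = (1::real) \<Longrightarrow> b = s * (-c*a + s*b) + c * (s*a + c*b)"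
proof -
  assume h: "c^2 + s^2 = 1"
  have "s * (-c*a + s*b) + c * (s*a + c*b) = b * (c^2 + s^2)" by (simp add: algebra_simps power2_eq_square)
  then show ?thesis using h by simp
qed

lemma deg_swap:
  assumes mn: "m \<noteq> n"
  shows "degL (\<lambda>x::real^4. \<chi> i. x $ Transposition.transpose m n i) = -1"
proof -
  let ?K = "\<lambda>p::real \<times> (real^4). \<chi> i. if i = m then - cos (fst p * pi/2) * snd p $ m + sin (fst p * pi/2) * snd p $ n
      else if i = n then sin (fst p * pi/2) * snd p $ m + cos (fst p * pi/2) * snd p $ n else snd p $ i"
  have "degL (\<lambda>x. ?K (0, x)) = degL (\<lambda>x. ?K (1, x))"
  proof (rule deg_homotopy)
    show "continuous_on ({0..1} \<times> sphere 0 1) ?K"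
      apply (intro continuous_on_vec_lambda)
      subgoal for i by (cases "i = m"; cases "i = n") (auto intro!: continuous_intros)
      done
    show "\<forall>t\<in>{0..1}. \<forall>x\<in>sphere 0 1. ?K (t, x) \<noteq> 0"
    proof (intro ballI notI)
      fix t x assume t: "t \<in> {0..(1::real)}" and x: "(x::real^4) \<in> sphere 0 1"
        and z: "?K (t, x) = 0"
      define c where "c = cos (t * pi/2)"
      define s where "s = sin (t * pi/2)"
      have cs: "c^2 + s^2 = 1" by (simp add: c_def s_def add.commute)
      have zi: "?K (t, x) $ i = 0" for i using z by simp
      have e1: "-c * x$m + s * x$n = 0" using zi[of m] mn unfolding c_def s_def by simp
      have e2: "s * x$m + c * x$n = 0" using zi[of n] mn unfolding c_def s_def by simp
      have r1: "x$m = -c * (-c * x$m + s * x$n) + s * (s * x$m + c * x$n)" by (rule rot_inv[OF cs])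
      have r2: "x$n = s * (-c * x$m + s * x$n) + c * (s * x$m + c * x$n)" by (rule rot_inv2[OF cs])
      have "x$m = 0" using r1 by (simp only: e1 e2 mult_zero_right add_0_right)
      moreover have "x$n = 0" using r2 by (simp only: e1 e2 mult_zero_right add_0_right)
      moreover have "x$i = 0" if "i \<noteq> m" "i \<noteq> n" for i
        using zi[of i] that by simp
      ultimately have "x = 0" unfolding vec_eq_iff by (metis zero_index)
      then show False using x by simp
    qed
  qed
  moreover have "(\<lambda>x. ?K (0, x)) = refl4 m"
    using mn by (auto simp: fun_eq_iff vec_eq_iff refl4_def)
  moreover have "(\<lambda>x. ?K (1, x)) = (\<lambda>x::real^4. \<chi> i. x $ Transposition.transpose m n i)"
    using mn by (auto simp: fun_eq_iff vec_eq_iff Transposition.transpose_def)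
  ultimately show ?thesis using deg_refl4 by simp
qed

lemma deg_shear:
  assumes mn: "m \<noteq> n"
  shows "degL (\<lambda>x::real^4. \<chi> i. if i = m then x$m + x$n else x$i) = 1"
proof -
  let ?K = "\<lambda>p::real \<times> (real^4). \<chi> i. if i = m then snd p $ m + fst p * snd p $ n else snd p $ i"
  have "degL (\<lambda>x. ?K (0, x)) = degL (\<lambda>x. ?K (1, x))"
  proof (rule deg_homotopy)
    show "continuous_on ({0..1} \<times> sphere 0 1) ?K"
      apply (intro continuous_on_vec_lambda)
      subgoal for i by (cases "i = m") (auto intro!: continuous_intros)
      done
    show "\<forall>t\<in>{0..1}. \<forall>x\<in>sphere 0 1. ?K (t, x) \<noteq> 0"
    proof (intro ballI notI)
      fix t x assume t: "t \<in> {0..(1::real)}" and x: "(x::real^4) \<in> sphere 0 1"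
        and z: "?K (t, x) = 0"
      have zi: "?K (t, x) $ i = 0" for i using z by simp
      have o: "x$i = 0" if "i \<noteq> m" for i
        using zi[of i] that by simp
      have "x$m + t * x$n = 0" using zi[of m] by simp
      then have "x$m = 0" using o[OF mn[symmetric]] by simp
      with o have "x = 0" unfolding vec_eq_iff by (metis zero_index)
      then show False using x by simp
    qed
  qed
  moreover have "(\<lambda>x. ?K (0, x)) = (\<lambda>x. x)"
    by (auto simp: fun_eq_iff vec_eq_iff)
  moreover have "(\<lambda>x. ?K (1, x)) = (\<lambda>x::real^4. \<chi> i. if i = m then x$m + x$n else x$i)"
    by (auto simp: fun_eq_iff vec_eq_iff)
  ultimately show ?thesis using deg_id by simp
qed



lemma deg_linear:
  fixes F :: "real^4 \<Rightarrow> real^4"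
  assumes "linear F"
  shows "det (matrix F) \<noteq> 0 \<longrightarrow> real_of_int (degL F) = sgn (det (matrix F))"
proof (rule induct_linear_elementary[OF assms])
  fix f g :: "real^4 \<Rightarrow> real^4"
  assume comp: "linear f" "linear g" "det (matrix f) \<noteq> 0 \<longrightarrow> real_of_int (degL f) = sgn (det (matrix f))"
     "det (matrix g) \<noteq> 0 \<longrightarrow> real_of_int (degL g) = sgn (det (matrix g))"
  show "det (matrix (f \<circ> g)) \<noteq> 0 \<longrightarrow> real_of_int (degL (f \<circ> g)) = sgn (det (matrix (f \<circ> g)))"
  proof
    assume d: "det (matrix (f \<circ> g)) \<noteq> 0"
    have m: "matrix (f \<circ> g) = matrix f ** matrix g" by (rule matrix_compose[OF comp(2) comp(1)])
    have df: "det (matrix f) \<noteq> 0" and dg: "det (matrix g) \<noteq> 0" using d unfolding m det_mul by auto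
    have "degL (f \<circ> g) = degL f * degL g"
      using comp df dg det_nz_iff_inj by (intro deg_compose) auto
    then show "real_of_int (degL (f \<circ> g)) = sgn (det (matrix (f \<circ> g)))"
      using comp df dg unfolding m det_mul by (simp add: sgn_mult)
  qed
next
  fix f :: "real^4 \<Rightarrow> real^4" and i
  assume zeroes: "linear f" "\<And>x. f x $ i = 0"
  have "row i (matrix f) = 0"
    unfolding row_def matrix_def vec_eq_iff using zeroes(2) by simp
  then have "det (matrix f) = 0" by (rule det_zero_row)
  then show "det (matrix f) \<noteq> 0 \<longrightarrow> real_of_int (degL f) = sgn (det (matrix f))" by simp
next
  fix c :: "4 \<Rightarrow> real"
  show "det (matrix (\<lambda>x. \<chi> i. c i * x $ i)) \<noteq> 0 \<longrightarrow> real_of_int (degL (\<lambda>x. \<chi> i. c i * x $ i)) = sgn (det (matrix (\<lambda>x. \<chi> i. c i * x $ i)))"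
  proof
    assume d: "det (matrix (\<lambda>x. \<chi> i. c i * x $ i)) \<noteq> 0"
    then have "c 1 * c 2 * c 3 * c 4 \<noteq> 0" by (simp add: det_diag)
    then have "c i \<noteq> 0" for i using exhaust_4[of i] by auto
    then show "real_of_int (degL (\<lambda>x. \<chi> i. c i * x $ i)) = sgn (det (matrix (\<lambda>x. \<chi> i. c i * x $ i)))"
      by (simp add: deg_diag det_diag sgn_mult)
  qed
next
  fix m n :: 4 assume "m \<noteq> n"
  then show "det (matrix (\<lambda>x. \<chi> i. x $ Transposition.transpose m n i)) \<noteq> 0 \<longrightarrow> real_of_int (degL (\<lambda>x. \<chi> i. x $ Transposition.transpose m n i)) = sgn (det (matrix (\<lambda>x. \<chi> i. x $ Transposition.transpose m n i)))"
    by (simp add: deg_swap det_swap)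
next
  fix m n :: 4 assume "m \<noteq> n"
  then show "det (matrix (\<lambda>x. \<chi> i. if i = m then x $ m + x $ n else x $ i)) \<noteq> 0 \<longrightarrow> real_of_int (degL (\<lambda>x. \<chi> i. if i = m then x $ m + x $ n else x $ i)) = sgn (det (matrix (\<lambda>x. \<chi> i. if i = m then x $ m + x $ n else x $ i)))"
    by (simp add: deg_shear det_shear)
qed



lemma bl_comp_of_real: "bounded_linear (\<lambda>x::real^4. (of_real (x$k) :: complex))"
  by (rule bounded_linear_compose[OF bounded_linear_of_real bounded_linear_vec_nth])

lemma diff_z: "(\<lambda>x::real^4. Complex (x$k) (x$l)) differentiable (at x)"
proof -
  have "(\<lambda>x::real^4. Complex (x$k) (x$l)) = (\<lambda>x. of_real (x$k) + \<i> * of_real (x$l))"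
    by (simp add: fun_eq_iff complex_eq_iff)
  moreover have "(\<lambda>x::real^4. of_real (x$k) + \<i> * (of_real (x$l) :: complex)) differentiable (at x)"
    using bounded_linear_imp_differentiable[OF bl_comp_of_real] by (intro derivative_intros) auto
  ultimately show ?thesis by simp
qed

lemma diff_cz: "(\<lambda>x::real^4. cnj (Complex (x$k) (x$l))) differentiable (at x)"
  by (rule differentiable_compose[OF bounded_linear_imp_differentiable[OF bounded_linear_cnj] diff_z])

lemma mp_diff:
  assumes "mixed_poly f"
  shows "(\<lambda>x. f (to_C2 x)) differentiable (at x)"
proof -
  obtain c N where f: "\<And>z1 z2. f (z1, z2) =
           (\<Sum>a\<le>N. \<Sum>b\<le>N. \<Sum>d\<le>N. \<Sum>e\<le>N.
               c (a, b, d, e) * z1 ^ a * cnj z1 ^ b * z2 ^ d * cnj z2 ^ e)"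
    using assms unfolding mixed_poly_def by blast
  have eq: "(\<lambda>x. f (to_C2 x)) = (\<lambda>x. (\<Sum>a\<le>N. \<Sum>b\<le>N. \<Sum>d\<le>N. \<Sum>e\<le>N.
               c (a, b, d, e) * Complex (x$1) (x$2) ^ a * cnj (Complex (x$1) (x$2)) ^ b
                 * Complex (x$3) (x$4) ^ d * cnj (Complex (x$3) (x$4)) ^ e))"
    by (simp add: fun_eq_iff to_C2_def f)
  show ?thesis unfolding eq
    by (intro differentiable_sum ballI finite_atMost derivative_intros diff_z diff_cz)
qed

lemma re_diff: "mixed_poly f \<Longrightarrow> re_part f differentiable (at x)"
  unfolding re_part_def
  by (rule differentiable_compose[OF bounded_linear_imp_differentiable[OF bounded_linear_Re] mp_diff])

lemma im_diff: "mixed_poly f \<Longrightarrow> im_part f differentiable (at x)"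
  unfolding im_part_def
  by (rule differentiable_compose[OF bounded_linear_imp_differentiable[OF bounded_linear_Im] mp_diff])

lemma vec2_eq: "(vector [a, b] :: real^2) = a *\<^sub>R axis 1 1 + b *\<^sub>R axis 2 1"
  unfolding vec_eq_iff by (auto simp: axis_def forall_2)

lemma vec4_eq: "(vector [a, b, c, d] :: real^4) = a *\<^sub>R axis 1 1 + b *\<^sub>R axis 2 1 + c *\<^sub>R axis 3 1 + d *\<^sub>R axis 4 1"
  unfolding vec_eq_iff by (auto simp: axis_def forall_4)



lemma rho_cont:
  fixes \<Phi> L :: "real^4 \<Rightarrow> real^4"
  assumes d: "(\<Phi> has_derivative L) (at P)" and z: "\<Phi> P = 0" and c: "continuous_on UNIV \<Phi>"
  shows "continuous_on UNIV (\<lambda>h. if h = 0 then 0 else (\<Phi> (P + h) - L h) /\<^sub>R norm h)"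
    (is "continuous_on UNIV ?r")
proof -
  have bl: "bounded_linear L" using d by (rule has_derivative_bounded_linear)
  have "isCont ?r h" for h
  proof (cases "h = 0")
    case True
    have lim: "((\<lambda>h. norm (\<Phi> (P + h) - \<Phi> P - L h) / norm h) \<longlongrightarrow> 0) (at 0)"
      using d unfolding has_derivative_at by blast
    have ev: "eventually (\<lambda>h. norm (\<Phi> (P + h) - \<Phi> P - L h) / norm h = norm (?r h)) (at 0)"
      unfolding eventually_at_filter by (rule always_eventually) (simp add: z divide_inverse_commute)
    have "((\<lambda>h. norm (?r h)) \<longlongrightarrow> 0) (at 0)"
      using tendsto_cong[OF ev] lim by simp
    then have "(?r \<longlongrightarrow> 0) (at 0)" by (rule tendsto_norm_zero_cancel)
    then show ?thesis using True unfolding isCont_def by simp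
  next
    case False
    have ev: "eventually (\<lambda>x. (\<Phi> (P + x) - L x) /\<^sub>R norm x = ?r x) (nhds h)"
      using eventually_nhds_in_open[of "-{0}" h] False
      by (auto elim!: eventually_mono)
    have ct: "isCont (\<lambda>x. (\<Phi> (P + x) - L x) /\<^sub>R norm x) h"
    proof -
      have "isCont (\<lambda>x. \<Phi> (P + x)) h"
        using c by (auto intro!: continuous_intros simp: continuous_on_eq_continuous_at
            intro: isCont_o2[where g=\<Phi>])
      moreover have "isCont L h" using bl by (simp add: linear_continuous_at)
      ultimately show ?thesis using False by (auto intro!: continuous_intros)
    qed
    show ?thesis using isCont_cong[OF ev] ct by simp
  qed
  then show ?thesis by (simp add: continuous_on_eq_continuous_at)
qed

lemma degL_cong_sphere:
  assumes "\<And>v. v \<in> sphere 0 1 \<Longrightarrow> sgn (F v) = sgn (G v)"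
  shows "degL F = degL G"
  unfolding degL_def
proof (rule Brouwer_degree2_eq)
  fix y assume "y \<in> topspace (nsphere 3)"
  then have "to_R4 y \<in> sphere 0 1" by (rule to_R4_sphere)
  then show "from_R4 (sgn (F (to_R4 y))) = from_R4 (sgn (G (to_R4 y)))" using assms by simp
qed

lemma deg_local:
  fixes \<Phi> L :: "real^4 \<Rightarrow> real^4"
  assumes d: "(\<Phi> has_derivative L) (at P)" and z: "\<Phi> P = 0" and c: "continuous_on UNIV \<Phi>"
    and dt: "det (matrix L) \<noteq> 0" and e: "\<epsilon> > 0"
    and iso: "\<And>x. x \<in> cball P \<epsilon> \<Longrightarrow> \<Phi> x = 0 \<Longrightarrow> x = P"
  shows "degL (\<lambda>v. \<Phi> (P + \<epsilon> *\<^sub>R v)) = degL L"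
proof -
  define r where "r = (\<lambda>h. if h = 0 then 0 else (\<Phi> (P + h) - L h) /\<^sub>R norm h)"
  have bl: "bounded_linear L" using d by (rule has_derivative_bounded_linear)
  then have lin: "linear L" by (rule bounded_linear.linear)
  have injL: "inj L" using dt det_nz_iff_inj[OF lin] by simp
  have rc: "continuous_on UNIV r" unfolding r_def by (rule rho_cont[OF d z c])
  define K where "K = (\<lambda>p::real \<times> (real^4). L (snd p) + r ((fst p * \<epsilon>) *\<^sub>R snd p))"
  have Kt: "K (t, v) = (1 / (t * \<epsilon>)) *\<^sub>R \<Phi> (P + (t * \<epsilon>) *\<^sub>R v)"
    if "t > 0" "norm v = 1" for t v
  proof -
    have v0: "v \<noteq> 0" using that by auto
    have n: "norm ((t * \<epsilon>) *\<^sub>R v) = t * \<epsilon>" using that e by simp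
    have "K (t, v) = L v + (\<Phi> (P + (t * \<epsilon>) *\<^sub>R v) - (t * \<epsilon>) *\<^sub>R L v) /\<^sub>R (t * \<epsilon>)"
      unfolding K_def r_def using that e v0 n by (simp add: linear_scale[OF lin])
    also have "\<dots> = (1 / (t * \<epsilon>)) *\<^sub>R \<Phi> (P + (t * \<epsilon>) *\<^sub>R v)"
      using that e by (simp add: algebra_simps divide_simps)
    finally show ?thesis .
  qed
  have "degL (\<lambda>v. K (0, v)) = degL (\<lambda>v. K (1, v))"
  proof (rule deg_homotopy)
    show "continuous_on ({0..1} \<times> sphere 0 1) K"
    proof -
      have "continuous_on ({0..1} \<times> sphere 0 1) (\<lambda>p::real \<times> (real^4). L (snd p))"
        by (rule continuous_on_compose2[OF linear_continuous_on[OF bl]]) (auto intro: continuous_intros)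
      then show ?thesis
      unfolding K_def
      by (intro continuous_intros
          continuous_on_compose2[OF rc, where f="\<lambda>p. (fst p * \<epsilon>) *\<^sub>R snd p"]) auto
    qed
    show "\<forall>t\<in>{0..1}. \<forall>x\<in>sphere 0 1. K (t, x) \<noteq> 0"
    proof (intro ballI)
      fix t x assume t: "t \<in> {0..(1::real)}" and x: "(x::real^4) \<in> sphere 0 1"
      show "K (t, x) \<noteq> 0"
      proof (cases "t = 0")
        case True
        have "x \<noteq> 0" using x by auto
        then have "L x \<noteq> 0" using inj_nz[OF lin injL] by blast
        then show ?thesis unfolding K_def r_def using True by simp
      next
        case False
        then have tp: "t > 0" using t by simp
        have nx: "norm x = 1" using x by simp
        have inb: "P + (t * \<epsilon>) *\<^sub>R x \<in> cball P \<epsilon>"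
          using t e nx by (simp add: dist_norm)
        have "P + (t * \<epsilon>) *\<^sub>R x \<noteq> P" using tp e nx by auto
        then have "\<Phi> (P + (t * \<epsilon>) *\<^sub>R x) \<noteq> 0" using iso inb by blast
        then show ?thesis using Kt[OF tp nx] tp e by simp
      qed
    qed
  qed
  moreover have "(\<lambda>v. K (0, v)) = L" unfolding K_def r_def by auto
  moreover have "degL (\<lambda>v. K (1, v)) = degL (\<lambda>v. \<Phi> (P + \<epsilon> *\<^sub>R v))"
  proof (rule degL_cong_sphere)
    fix v :: "real^4" assume "v \<in> sphere 0 1"
    then have nv: "norm v = 1" by simp
    show "sgn (K (1, v)) = sgn (\<Phi> (P + \<epsilon> *\<^sub>R v))"
      using Kt[of 1 v] nv e by (simp add: sgn_scaleR)
  qed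
  ultimately show ?thesis by simp
qed



lemma mult_row: "((A::real^'n^'m) *v x) $ i = row i A \<bullet> x"
  by (simp add: matrix_vector_mult_def inner_vec_def row_def mult.commute)

lemma grads:
  assumes mp: "mixed_poly f"
  shows "grad_re f P = (\<chi> j. frechet_derivative (re_part f) (at P) (axis j 1))"
    and "grad_im f P = (\<chi> j. frechet_derivative (im_part f) (at P) (axis j 1))"
proof -
  define Dr where "Dr = frechet_derivative (re_part f) (at P)"
  define Di where "Di = frechet_derivative (im_part f) (at P)"
  have hr: "(re_part f has_derivative Dr) (at P)"
    unfolding Dr_def using re_diff[OF mp] frechet_derivative_works by blast
  have hi: "(im_part f has_derivative Di) (at P)"
    unfolding Di_def using im_diff[OF mp] frechet_derivative_works by blast
  have hF: "((\<lambda>x. vector [re_part f x, im_part f x] :: real^2) has_derivative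
      (\<lambda>h. vector [Dr h, Di h])) (at P)"
    unfolding vec2_eq by (auto intro!: derivative_eq_intros hr hi)
  have j: "jac f P = matrix (\<lambda>h. vector [Dr h, Di h] :: real^2)"
    unfolding jac_def using frechet_derivative_at[OF hF] by simp
  show "grad_re f P = (\<chi> j. frechet_derivative (re_part f) (at P) (axis j 1))"
    unfolding grad_re_def j row_def matrix_def Dr_def by simp
  show "grad_im f P = (\<chi> j. frechet_derivative (im_part f) (at P) (axis j 1))"
    unfolding grad_im_def j row_def matrix_def Di_def by simp
qed

lemma phi_diff:
  assumes "mixed_poly f" "mixed_poly g"
  shows "phi_map f g differentiable (at x)"
  unfolding phi_map_def[abs_def] vec4_eq
  using assms by (intro derivative_intros re_diff im_diff)

lemma phi_deriv:
  assumes mf: "mixed_poly f" and mg: "mixed_poly g"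
  shows "(phi_map f g has_derivative (\<lambda>h. vector [frechet_derivative (re_part f) (at P) h,
     frechet_derivative (im_part f) (at P) h, frechet_derivative (re_part g) (at P) h,
     frechet_derivative (im_part g) (at P) h])) (at P)"
proof -
  have h: "(re_part f has_derivative frechet_derivative (re_part f) (at P)) (at P)"
    "(im_part f has_derivative frechet_derivative (im_part f) (at P)) (at P)"
    "(re_part g has_derivative frechet_derivative (re_part g) (at P)) (at P)"
    "(im_part g has_derivative frechet_derivative (im_part g) (at P)) (at P)"
    using re_diff[OF mf] im_diff[OF mf] re_diff[OF mg] im_diff[OF mg] frechet_derivative_works by blast+
  show ?thesis
    unfolding phi_map_def[abs_def] vec4_eq by (auto intro!: derivative_eq_intros h)
qed



lemma det4_nz:
  fixes u1 u2 v1 v2 :: "real^4"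
  assumes "span {u1, u2, v1, v2} = UNIV"
  shows "det4 u1 u2 v1 v2 \<noteq> 0"
proof -
  let ?A = "vector [u1, u2, v1, v2] :: real^4^4"
  have "rows ?A = {u1, u2, v1, v2}"
  proof -
    have r: "row i ?A = ?A $ i" for i by (simp add: row_def)
    have "rows ?A = (\<lambda>i. ?A $ i) ` UNIV" by (auto simp: rows_def r)
    also have "\<dots> = {u1, u2, v1, v2}" by (simp add: UNIV_4)
    finally show ?thesis .
  qed
  then have "span (rows ?A) = UNIV" using assms by simp
  then obtain B :: "real^4^4" where "B ** ?A = mat 1"
    using matrix_left_invertible_span_rows by blast
  then have "invertible ?A" using invertible_left_inverse by blast
  then show ?thesis unfolding det4_def using invertible_det_nz by blast
qed

lemma tangent_orth:
  assumes "u \<in> tangent_space f P"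
  shows "grad_re f P \<bullet> u = 0" "grad_im f P \<bullet> u = 0"
proof -
  have "jac f P *v u = 0" using assms by (simp add: tangent_space_def)
  then have "(jac f P *v u) $ 1 = 0" "(jac f P *v u) $ 2 = 0" by simp_all
  then show "grad_re f P \<bullet> u = 0" "grad_im f P \<bullet> u = 0"
    by (simp_all add: grad_re_def grad_im_def mult_row)
qed

theorem proposition3:
  fixes f g :: "complex \<times> complex \<Rightarrow> complex" and P :: "real^4"
  assumes "mixed_poly f" and "mixed_poly g"
    and "P \<in> zero_set f \<inter> zero_set g"
    and "mixed_nonsingular_at f P" and "mixed_nonsingular_at g P"
    and "transverse_at f g P"
    and "positive_tangent_basis f P u1 u2"
    and "positive_tangent_basis g P v1 v2"
    and "\<epsilon> > 0"
    and "zero_set f \<inter> zero_set g \<inter> cball P \<epsilon> = {P}"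
  shows "real_of_int (local_intersection_degree f g P \<epsilon>) = sgn (det4 u1 u2 v1 v2)"
proof -
  note mf = assms(1) and mg = assms(2)
  note pf = assms(7)[unfolded positive_tangent_basis_def]
  note pg = assms(8)[unfolded positive_tangent_basis_def]
  define Lp where "Lp = (\<lambda>h. vector [frechet_derivative (re_part f) (at P) h,
     frechet_derivative (im_part f) (at P) h, frechet_derivative (re_part g) (at P) h,
     frechet_derivative (im_part g) (at P) h] :: real^4)"
  have hd: "(phi_map f g has_derivative Lp) (at P)" unfolding Lp_def by (rule phi_deriv[OF mf mg])
  have mLp: "matrix Lp = vector [grad_re f P, grad_im f P, grad_re g P, grad_im g P]"
    unfolding matrix_def Lp_def grads[OF mf] grads[OF mg]
    apply (rule iffD2[OF vec_eq_iff], rule allI, rule iffD2[OF vec_eq_iff], rule allI)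
    subgoal for i j using exhaust_4[of i] by (elim disjE) simp_all
    done
  have D: "det4 u1 u2 v1 v2 \<noteq> 0"
  proof (rule det4_nz)
    have "UNIV = span (tangent_space f P \<union> tangent_space g P)"
      using assms(6) by (simp add: transverse_at_def)
    also have "\<dots> = span (span {u1, u2} \<union> span {v1, v2})" using pf pg by simp
    also have "\<dots> \<subseteq> span {u1, u2, v1, v2}"
    proof (rule span_minimal[OF _ subspace_span])
      have "span {u1, u2} \<subseteq> span {u1, u2, v1, v2}" by (rule span_mono) auto
      moreover have "span {v1, v2} \<subseteq> span {u1, u2, v1, v2}" by (rule span_mono) auto
      ultimately show "span {u1, u2} \<union> span {v1, v2} \<subseteq> span {u1, u2, v1, v2}" by blast
    qed
    finally show "span {u1, u2, v1, v2} = UNIV" by auto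
  qed
  have sr: "sgn (det4 (grad_re f P) (grad_im f P) (grad_re g P) (grad_im g P)) = sgn (det4 u1 u2 v1 v2)"
    by (rule sign_rel) (use pf pg tangent_orth D in auto)
  have dLp: "det (matrix Lp) = det4 (grad_re f P) (grad_im f P) (grad_re g P) (grad_im g P)"
    by (simp add: mLp det4_def)
  have dnz: "det (matrix Lp) \<noteq> 0" using sr D dLp by (metis sgn_zero_iff)
  have lin: "linear Lp" using has_derivative_bounded_linear[OF hd] bounded_linear.linear by blast
  have z: "phi_map f g P = 0"
    using assms(3) by (simp add: phi_map_def zero_set_def re_part_def im_part_def vec4_eq)
  have c: "continuous_on UNIV (phi_map f g)"
    using phi_diff[OF mf mg] by (simp add: differentiable_imp_continuous_on differentiable_on_def)
  have iso: "x = P" if "x \<in> cball P \<epsilon>" "phi_map f g x = 0" for x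
  proof -
    have "re_part f x = 0" "im_part f x = 0" "re_part g x = 0" "im_part g x = 0"
    proof -
      have "phi_map f g x $ k = 0" for k using that(2) by simp
      from this[of 1] this[of 2] this[of 3] this[of 4]
      show "re_part f x = 0" "im_part f x = 0" "re_part g x = 0" "im_part g x = 0"
        by (simp_all add: phi_map_def)
    qed
    then have "x \<in> zero_set f \<inter> zero_set g"
      by (simp add: zero_set_def re_part_def im_part_def complex_eq_iff)
    then show ?thesis using assms(10) that(1) by blast
  qed
  have "local_intersection_degree f g P \<epsilon> = degL (\<lambda>v. phi_map f g (P + \<epsilon> *\<^sub>R v))"
    by (simp add: local_intersection_degree_def degL_def)
  also have "\<dots> = degL Lp" by (rule deg_local[OF hd z c dnz assms(9) iso])
  finally have "real_of_int (local_intersection_degree f g P \<epsilon>) = sgn (det (matrix Lp))"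
    using deg_linear[OF lin] dnz by simp
  then show ?thesis using dLp sr by simp
qed

end
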